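(* Let $G=(V,E)$ be a graph on $n$ vertices and define $f:\mathbb{C}^{2n}\to\mathbb{C}^E$ by $$\left(p^{(1)}_v,p^{(2)}_v\right)_{v\in V}\longmapsto\left((p^{(1)}_v-p^{(1)}_u)(p^{(2)}_v-p^{(2)}_u)\right)_{uv\in E}.$$ Then the Zariski closure $\overline{f(\mathbb{C}^{2n})}$ (and consequently $f(\mathbb{C}^{2n})$) is not contained in any linear hyperplane of $\mathbb{C}^E$. *)

theory Defs
  imports Complex_Main
begin

definition cspace :: "'i set \<Rightarrow> ('i \<Rightarrow> complex) set" where
  "cspace I = {x. \<forall>i. i \<notin> I \<longrightarrow> x i = 0}"

inductive_set polyfun :: "'i set \<Rightarrow> (('i \<Rightarrow> complex) \<Rightarrow> complex) set" for I where
  pconst: "(\<lambda>x. c) \<in> polyfun I"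
| pvar: "i \<in> I \<Longrightarrow> (\<lambda>x. x i) \<in> polyfun I"
| padd: "P \<in> polyfun I \<Longrightarrow> Q \<in> polyfun I \<Longrightarrow> (\<lambda>x. P x + Q x) \<in> polyfun I"
| pmult: "P \<in> polyfun I \<Longrightarrow> Q \<in> polyfun I \<Longrightarrow> (\<lambda>x. P x * Q x) \<in> polyfun I"

definition zariski_closure :: "'i set \<Rightarrow> ('i \<Rightarrow> complex) set \<Rightarrow> ('i \<Rightarrow> complex) set" where
  "zariski_closure I S =
     {x \<in> cspace I. \<forall>P \<in> polyfun I. (\<forall>y \<in> S. P y = 0) \<longrightarrow> P x = 0}"

definition linear_hyperplane :: "'i set \<Rightarrow> ('i \<Rightarrow> complex) set \<Rightarrow> bool" where
  "linear_hyperplane I H \<longleftrightarrow>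
     (\<exists>c. (\<exists>i\<in>I. c i \<noteq> 0) \<and> H = {x \<in> cspace I. (\<Sum>i\<in>I. c i * x i) = 0})"

definition simple_graph :: "'a set \<Rightarrow> 'a set set \<Rightarrow> bool" where
  "simple_graph V E \<longleftrightarrow> finite V \<and> (\<forall>e\<in>E. \<exists>u v. u \<in> V \<and> v \<in> V \<and> u \<noteq> v \<and> e = {u, v})"

text \<open>Value on an edge e = {u,v}: (p1 v - p1 u)(p2 v - p2 u); symmetric in u,v,
  so the choice of the ordering is irrelevant.\<close>
definition edge_val :: "('a \<Rightarrow> complex) \<Rightarrow> ('a \<Rightarrow> complex) \<Rightarrow> 'a set \<Rightarrow> complex" where
  "edge_val p1 p2 e =
     (let u = (SOME u. u \<in> e); v = (SOME v. v \<in> e \<and> v \<noteq> u)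
      in (p1 v - p1 u) * (p2 v - p2 u))"

definition fmap :: "'a set set \<Rightarrow> ('a \<Rightarrow> complex) \<Rightarrow> ('a \<Rightarrow> complex) \<Rightarrow> ('a set \<Rightarrow> complex)" where
  "fmap E p1 p2 = (\<lambda>e. if e \<in> E then edge_val p1 p2 e else 0)"

end

theory Submission
  imports Defs
begin

lemma edge_val_pair:
  assumes "a \<noteq> b"
  shows "edge_val p1 p2 {a, b} = (p1 b - p1 a) * (p2 b - p2 a)"
proof -
  define u where "u = (SOME u. u \<in> {a, b})"
  define v where "v = (SOME v. v \<in> {a, b} \<and> v \<noteq> u)"
  have u: "u \<in> {a, b}" unfolding u_def by (rule someI[of _ a]) simp
  have ex: "\<exists>w. w \<in> {a, b} \<and> w \<noteq> u"
  proof (cases "u = a")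
    case True then show ?thesis using assms by blast
  next
    case False then show ?thesis by blast
  qed
  have v: "v \<in> {a, b} \<and> v \<noteq> u" unfolding v_def
    using someI_ex[OF ex] .
  have "edge_val p1 p2 {a, b} = (p1 v - p1 u) * (p2 v - p2 u)"
    unfolding edge_val_def Let_def u_def v_def by (rule refl)
  also have "\<dots> = (p1 b - p1 a) * (p2 b - p2 a)"
  proof -
    have "(u = a \<and> v = b) \<or> (u = b \<and> v = a)" using u v by blast
    then show ?thesis by (elim disjE) (simp_all add: algebra_simps)
  qed
  finally show ?thesis .
qed
theorem lemma3p8:
  fixes V :: "'a set" and E :: "'a set set"
  assumes "simple_graph V E"
  shows "\<forall>H. linear_hyperplane E H \<longrightarrow>
           \<not> zariski_closure E {fmap E p1 p2 | p1 p2. p1 \<in> cspace V \<and> p2 \<in> cspace V} \<subseteq> H"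
proof (intro allI impI notI)
  fix H
  assume hp: "linear_hyperplane E H"
    and sub: "zariski_closure E {fmap E p1 p2 | p1 p2. p1 \<in> cspace V \<and> p2 \<in> cspace V} \<subseteq> H"
  let ?S = "{fmap E p1 p2 | p1 p2. p1 \<in> cspace V \<and> p2 \<in> cspace V}"
  obtain c where c: "\<exists>i\<in>E. c i \<noteq> 0" and H: "H = {x \<in> cspace E. (\<Sum>i\<in>E. c i * x i) = 0}"
    using hp unfolding linear_hyperplane_def by blast
  obtain e0 where e0: "e0 \<in> E" "c e0 \<noteq> 0" using c by blast
  have fin: "finite V" and edges: "\<forall>e\<in>E. \<exists>u v. u \<in> V \<and> v \<in> V \<and> u \<noteq> v \<and> e = {u, v}"
    using assms unfolding simple_graph_def by auto
  have finE: "finite E"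
  proof -
    have "E \<subseteq> Pow V"
    proof
      fix e assume "e \<in> E"
      then obtain a b where "a \<in> V" "b \<in> V" "e = {a, b}" using edges by meson
      then show "e \<in> Pow V" by simp
    qed
    then show ?thesis using fin by (simp add: finite_subset)
  qed
  obtain u v where uv: "u \<in> V" "v \<in> V" "u \<noteq> v" "e0 = {u, v}" using edges e0(1) by meson
  define p1 where "p1 = (\<lambda>x. if x = u then 1 else (0::complex))"
  define p2 where "p2 = (\<lambda>x. if x = v then 1 else (0::complex))"
  have p1: "p1 \<in> cspace V" using uv unfolding cspace_def p1_def by simp
  have p2: "p2 \<in> cspace V" using uv unfolding cspace_def p2_def by simp
  have inS: "fmap E p1 p2 \<in> ?S" using p1 p2 by blast
  have inC: "fmap E p1 p2 \<in> cspace E" unfolding cspace_def fmap_def by simp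
  have inZ: "fmap E p1 p2 \<in> zariski_closure E ?S"
    unfolding zariski_closure_def
  proof (intro CollectI conjI ballI impI)
    fix P assume "\<forall>y\<in>?S. P y = 0"
    then show "P (fmap E p1 p2) = 0" using inS by (rule bspec)
  qed (rule inC)
  have zero: "c e * fmap E p1 p2 e = 0" if eE: "e \<in> E" and ne: "e \<noteq> e0" for e
  proof -
    obtain a b where ab: "a \<noteq> b" "e = {a, b}" using edges eE by meson
    have "edge_val p1 p2 e = (p1 b - p1 a) * (p2 b - p2 a)"
      using ab edge_val_pair by metis
    also have "\<dots> = 0"
    proof (rule ccontr)
      assume nz: "(p1 b - p1 a) * (p2 b - p2 a) \<noteq> 0"
      then have h1: "p1 b - p1 a \<noteq> 0" and h2: "p2 b - p2 a \<noteq> 0" by auto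
      have "u = a \<or> u = b" using h1 unfolding p1_def
        by (cases "b = u"; cases "a = u") auto
      moreover have "v = a \<or> v = b" using h2 unfolding p2_def
        by (cases "b = v"; cases "a = v") auto
      ultimately have "e = e0" using ab uv by blast
      then show False using ne by simp
    qed
    finally show ?thesis using eE by (simp add: fmap_def)
  qed
  have "(\<Sum>i\<in>E. c i * fmap E p1 p2 i) = c e0 * fmap E p1 p2 e0 + (\<Sum>i\<in>E - {e0}. c i * fmap E p1 p2 i)"
    using finE e0 by (simp add: sum.remove)
  also have "(\<Sum>i\<in>E - {e0}. c i * fmap E p1 p2 i) = 0"
    using zero by (intro sum.neutral) blast
  also have "fmap E p1 p2 e0 = -1"
  proof -
    have "fmap E p1 p2 e0 = edge_val p1 p2 {u, v}" using e0 uv unfolding fmap_def by simp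
    also have "\<dots> = (p1 v - p1 u) * (p2 v - p2 u)" using edge_val_pair uv(3) by metis
    also have "\<dots> = -1" using uv(3) unfolding p1_def p2_def by simp
    finally show ?thesis .
  qed
  finally have "(\<Sum>i\<in>E. c i * fmap E p1 p2 i) \<noteq> 0" using e0 by simp
  moreover have "fmap E p1 p2 \<in> H" using inZ sub by blast
  ultimately show False using H by blast
qed

end
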